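(* Let $(\mathbf{H},m,\Delta)$ be a self-adjoint poset Hopf monoid. For each finite set $I$ let $\mathbf{d}[I]$ be the subspace of $\mathbf{k}\mathbf{H}[I]$ spanned by the products $m_{S,T}(y,z)$ with $I=S\sqcup T$, $S,T$ nonempty, $y\in\mathbf{H}[S]$, $z\in\mathbf{H}[T]$, and let $\mathbf{p}[I]$ be the subspace of primitive elements of $\mathbf{k}\mathbf{H}[I]$. Then $\mathbf{k}\mathbf{H}[I]=\mathbf{p}[I]\oplus\mathbf{d}[I]$ for every finite set $I$.
   Context: $\mathbf{k}$ is a field of characteristic $0$. A (connected) poset species $\mathbf{H}$ assigns to each finite set $I$ a locally finite poset $\mathbf{H}[I]$, $\mathbf{H}[\emptyset]=\{1\}$, and to each bijection an order-preserving bijection, functorially. A poset Hopf monoid $(\mathbf{H},m,\Delta)$ consists of order-preserving maps $m_{S,T}:\mathbf{H}[S]\times\mathbf{H}[T]\to\mathbf{H}[S\sqcup T]$ (natural, associative, unital) and $\Delta_{S,T}:\mathbf{H}[S\sqcup T]\to\mathbf{H}[S]\times\mathbf{H}[T]$ (natural, coassociative, counital), satisfying compatibility: for $I=S_1\sqcup S_2=T_1\sqcup T_2$, $A=S_1\cap T_1$, $B=S_1\cap T_2$, $C=S_2\cap T_1$, $D=S_2\cap T_2$, if $\Delta_{A,B}(x)=(x_A,x_B)$, $\Delta_{C,D}(y)=(y_C,y_D)$ then $\Delta_{T_1,T_2}(m_{S_1,S_2}(x,y))=(m_{A,C}(x_A,y_C),m_{B,D}(x_B,y_D))$. It is self-adjoint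 if $m_{S,T}$ and $\Delta_{S,T}$ form a Galois connection for all $S,T$ (i.e. $(\mathbf{H},\Delta)$ and $(\mathbf{H},m)$ form an adjoint pair: either $\Delta_{S,T}(x)\le(y,z)\iff x\le m_{S,T}(y,z)$ for all $x,y,z$, or $m_{S,T}(y,z)\le x\iff(y,z)\le\Delta_{S,T}(x)$ for all $x,y,z$). $\mathbf{k}\mathbf{H}[I]$ is the vector space with basis $\mathbf{H}[I]$, operations extended linearly. An element $p\in\mathbf{k}\mathbf{H}[I]$ is primitive if $\Delta_{S,T}(p)=0$ for all $I=S\sqcup T$ with $S,T$ nonempty. *)

theory Defs
  imports Main
begin

text \<open>
A poset species over ground type 'e with points of type 'h:
  car I     : the underlying set of the poset H[I]   (I a finite subset of 'e)
  le I      : the partial order of H[I]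
  rel s I   : the map H[s] : H[I] -> H[s ` I] for s injective on I
Operations: mul S T = m_{S,T}, cop S T = Delta_{S,T}; one = the unique element of H[{}].
\<close>

definition locally_finite_poset :: "'h set \<Rightarrow> ('h \<Rightarrow> 'h \<Rightarrow> bool) \<Rightarrow> bool" where
  "locally_finite_poset A r \<longleftrightarrow>
     (\<forall>x\<in>A. r x x) \<and>
     (\<forall>x\<in>A. \<forall>y\<in>A. r x y \<and> r y x \<longrightarrow> x = y) \<and>
     (\<forall>x\<in>A. \<forall>y\<in>A. \<forall>z\<in>A. r x y \<and> r y z \<longrightarrow> r x z) \<and>
     (\<forall>x\<in>A. \<forall>y\<in>A. finite {w\<in>A. r x w \<and> r w y})"

definition poset_species ::
  "('e set \<Rightarrow> 'h set) \<Rightarrow> ('e set \<Rightarrow> 'h \<Rightarrow> 'h \<Rightarrow> bool) \<Rightarrow> (('e \<Rightarrow> 'e) \<Rightarrow> 'e set \<Rightarrow> 'h \<Rightarrow> 'h)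
    \<Rightarrow> 'h \<Rightarrow> bool" where
  "poset_species car le rel one \<longleftrightarrow>
     car {} = {one} \<and>
     (\<forall>I. finite I \<longrightarrow> locally_finite_poset (car I) (le I)) \<and>
     (\<forall>I s. finite I \<and> inj_on s I \<longrightarrow>
        bij_betw (rel s I) (car I) (car (s ` I)) \<and>
        (\<forall>x\<in>car I. \<forall>y\<in>car I. le I x y \<longrightarrow> le (s ` I) (rel s I x) (rel s I y))) \<and>
     (\<forall>I s t. finite I \<and> (\<forall>i\<in>I. s i = t i) \<longrightarrow> (\<forall>x\<in>car I. rel s I x = rel t I x)) \<and>
     (\<forall>I. finite I \<longrightarrow> (\<forall>x\<in>car I. rel id I x = x)) \<and>
     (\<forall>I s t. finite I \<and> inj_on s I \<and> inj_on t (s ` I) \<longrightarrow>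
        (\<forall>x\<in>car I. rel (t \<circ> s) I x = rel t (s ` I) (rel s I x)))"

definition prod_le :: "('e set \<Rightarrow> 'h \<Rightarrow> 'h \<Rightarrow> bool) \<Rightarrow> 'e set \<Rightarrow> 'e set \<Rightarrow> 'h \<times> 'h \<Rightarrow> 'h \<times> 'h \<Rightarrow> bool" where
  "prod_le le S T p q \<longleftrightarrow> le S (fst p) (fst q) \<and> le T (snd p) (snd q)"

definition poset_hopf_monoid ::
  "('e set \<Rightarrow> 'h set) \<Rightarrow> ('e set \<Rightarrow> 'h \<Rightarrow> 'h \<Rightarrow> bool) \<Rightarrow> (('e \<Rightarrow> 'e) \<Rightarrow> 'e set \<Rightarrow> 'h \<Rightarrow> 'h)
    \<Rightarrow> 'h \<Rightarrow> ('e set \<Rightarrow> 'e set \<Rightarrow> 'h \<Rightarrow> 'h \<Rightarrow> 'h) \<Rightarrow> ('e set \<Rightarrow> 'e set \<Rightarrow> 'h \<Rightarrow> 'h \<times> 'h) \<Rightarrow> bool" where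
  "poset_hopf_monoid car le rel one mul cop \<longleftrightarrow>
     poset_species car le rel one \<and>
     \<comment> \<open>m: well-defined, order preserving\<close>
     (\<forall>S T. finite S \<and> finite T \<and> S \<inter> T = {} \<longrightarrow>
        (\<forall>y\<in>car S. \<forall>z\<in>car T. mul S T y z \<in> car (S \<union> T)) \<and>
        (\<forall>y\<in>car S. \<forall>z\<in>car T. \<forall>y'\<in>car S. \<forall>z'\<in>car T.
            le S y y' \<and> le T z z' \<longrightarrow> le (S \<union> T) (mul S T y z) (mul S T y' z'))) \<and>
     \<comment> \<open>Delta: well-defined, order preserving\<close>
     (\<forall>S T. finite S \<and> finite T \<and> S \<inter> T = {} \<longrightarrow>
        (\<forall>x\<in>car (S \<union> T). cop S T x \<in> car S \<times> car T) \<and>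
        (\<forall>x\<in>car (S \<union> T). \<forall>x'\<in>car (S \<union> T).
            le (S \<union> T) x x' \<longrightarrow> prod_le le S T (cop S T x) (cop S T x'))) \<and>
     \<comment> \<open>naturality\<close>
     (\<forall>S T s. finite S \<and> finite T \<and> S \<inter> T = {} \<and> inj_on s (S \<union> T) \<longrightarrow>
        (\<forall>y\<in>car S. \<forall>z\<in>car T.
           rel s (S \<union> T) (mul S T y z) = mul (s ` S) (s ` T) (rel s S y) (rel s T z)) \<and>
        (\<forall>x\<in>car (S \<union> T).
           cop (s ` S) (s ` T) (rel s (S \<union> T) x)
             = (rel s S (fst (cop S T x)), rel s T (snd (cop S T x))))) \<and>
     \<comment> \<open>associativity\<close>
     (\<forall>R S T. finite R \<and> finite S \<and> finite T \<and> R \<inter> S = {} \<and> R \<inter> T = {} \<and> S \<inter> T = {} \<longrightarrow>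
        (\<forall>x\<in>car R. \<forall>y\<in>car S. \<forall>z\<in>car T.
           mul (R \<union> S) T (mul R S x y) z = mul R (S \<union> T) x (mul S T y z))) \<and>
     \<comment> \<open>unitality\<close>
     (\<forall>S. finite S \<longrightarrow> (\<forall>x\<in>car S. mul {} S one x = x \<and> mul S {} x one = x)) \<and>
     \<comment> \<open>coassociativity\<close>
     (\<forall>R S T. finite R \<and> finite S \<and> finite T \<and> R \<inter> S = {} \<and> R \<inter> T = {} \<and> S \<inter> T = {} \<longrightarrow>
        (\<forall>x\<in>car (R \<union> S \<union> T).
           (cop R S (fst (cop (R \<union> S) T x)), snd (cop (R \<union> S) T x))
           = ((fst (cop R (S \<union> T) x), fst (cop S T (snd (cop R (S \<union> T) x)))),
              snd (cop S T (snd (cop R (S \<union> T) x)))))) \<and>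
     \<comment> \<open>counitality\<close>
     (\<forall>S. finite S \<longrightarrow> (\<forall>x\<in>car S. cop {} S x = (one, x) \<and> cop S {} x = (x, one))) \<and>
     \<comment> \<open>compatibility\<close>
     (\<forall>S1 S2 T1 T2. finite S1 \<and> finite S2 \<and> finite T1 \<and> finite T2 \<and>
        S1 \<inter> S2 = {} \<and> T1 \<inter> T2 = {} \<and> S1 \<union> S2 = T1 \<union> T2 \<longrightarrow>
        (\<forall>x\<in>car S1. \<forall>y\<in>car S2.
           cop T1 T2 (mul S1 S2 x y)
           = (mul (S1 \<inter> T1) (S2 \<inter> T1) (fst (cop (S1 \<inter> T1) (S1 \<inter> T2) x))
                                         (fst (cop (S2 \<inter> T1) (S2 \<inter> T2) y)),
              mul (S1 \<inter> T2) (S2 \<inter> T2) (snd (cop (S1 \<inter> T1) (S1 \<inter> T2) x))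
                                         (snd (cop (S2 \<inter> T1) (S2 \<inter> T2) y)))))"

text \<open>Self-adjoint: m and Delta form a Galois connection (in one of the two directions, uniformly).\<close>
definition self_adjoint ::
  "('e set \<Rightarrow> 'h set) \<Rightarrow> ('e set \<Rightarrow> 'h \<Rightarrow> 'h \<Rightarrow> bool)
    \<Rightarrow> ('e set \<Rightarrow> 'e set \<Rightarrow> 'h \<Rightarrow> 'h \<Rightarrow> 'h) \<Rightarrow> ('e set \<Rightarrow> 'e set \<Rightarrow> 'h \<Rightarrow> 'h \<times> 'h) \<Rightarrow> bool" where
  "self_adjoint car le mul cop \<longleftrightarrow>
     (\<forall>S T. finite S \<and> finite T \<and> S \<inter> T = {} \<longrightarrow>
        (\<forall>x\<in>car (S \<union> T). \<forall>y\<in>car S. \<forall>z\<in>car T.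
           prod_le le S T (cop S T x) (y, z) \<longleftrightarrow> le (S \<union> T) x (mul S T y z))) \<or>
     (\<forall>S T. finite S \<and> finite T \<and> S \<inter> T = {} \<longrightarrow>
        (\<forall>x\<in>car (S \<union> T). \<forall>y\<in>car S. \<forall>z\<in>car T.
           le (S \<union> T) (mul S T y z) x \<longleftrightarrow> prod_le le S T (y, z) (cop S T x)))"

text \<open>The vector space kH[I]: finitely supported functions car I -> k.\<close>
definition kspace :: "('e set \<Rightarrow> 'h set) \<Rightarrow> 'e set \<Rightarrow> ('h \<Rightarrow> 'k::zero) set" where
  "kspace car I = {f. finite {x. f x \<noteq> 0} \<and> {x. f x \<noteq> 0} \<subseteq> car I}"

definition bvec :: "'h \<Rightarrow> 'h \<Rightarrow> 'k::{zero,one}" where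
  "bvec x = (\<lambda>w. if w = x then 1 else 0)"

text \<open>Linear extension of Delta_{S,T}: kH[S \<union> T] -> k(H[S] x H[T]) = kH[S] \<otimes> kH[T].\<close>
definition cop_lin :: "('e set \<Rightarrow> 'e set \<Rightarrow> 'h \<Rightarrow> 'h \<times> 'h) \<Rightarrow> 'e set \<Rightarrow> 'e set
    \<Rightarrow> ('h \<Rightarrow> 'k::comm_monoid_add) \<Rightarrow> ('h \<times> 'h \<Rightarrow> 'k)" where
  "cop_lin cop S T f = (\<lambda>p. \<Sum>x\<in>{x. f x \<noteq> 0 \<and> cop S T x = p}. f x)"

definition prim :: "('e set \<Rightarrow> 'h set) \<Rightarrow> ('e set \<Rightarrow> 'e set \<Rightarrow> 'h \<Rightarrow> 'h \<times> 'h) \<Rightarrow> 'e set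
    \<Rightarrow> ('h \<Rightarrow> 'k::comm_monoid_add) set" where
  "prim car cop I = {f \<in> kspace car I.
     \<forall>S T. S \<union> T = I \<and> S \<inter> T = {} \<and> S \<noteq> {} \<and> T \<noteq> {} \<longrightarrow> cop_lin cop S T f = (\<lambda>_. 0)}"

definition decomp :: "('e set \<Rightarrow> 'h set) \<Rightarrow> ('e set \<Rightarrow> 'e set \<Rightarrow> 'h \<Rightarrow> 'h \<Rightarrow> 'h) \<Rightarrow> 'e set
    \<Rightarrow> ('h \<Rightarrow> 'k::comm_ring_1) set" where
  "decomp car mul I = {f. \<exists>A c. finite A \<and>
     A \<subseteq> {mul S T y z | S T y z. S \<union> T = I \<and> S \<inter> T = {} \<and> S \<noteq> {} \<and> T \<noteq> {} \<and>
                                  y \<in> car S \<and> z \<in> car T} \<and>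
     f = (\<lambda>w. \<Sum>a\<in>A. c a * bvec a w)}"

end

theory Submission
  imports Defs
begin


lemma fin_min:
  assumes "finite A" "A \<noteq> {}"
    and tr: "\<forall>a\<in>A. \<forall>b\<in>A. \<forall>c\<in>A. r a b \<longrightarrow> r b c \<longrightarrow> r a c"
    and an: "\<forall>a\<in>A. \<forall>b\<in>A. r a b \<longrightarrow> r b a \<longrightarrow> a = b"
  shows "\<exists>m\<in>A. \<forall>b\<in>A. r b m \<longrightarrow> b = m"
  using assms
proof (induction A rule: finite_ne_induct)
  case (singleton x) then show ?case by blast
next
  case (insert a A)
  have tr': "\<forall>a\<in>A. \<forall>b\<in>A. \<forall>c\<in>A. r a b \<longrightarrow> r b c \<longrightarrow> r a c"
    using insert.prems(1) by (meson insertCI)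
  have an': "\<forall>a\<in>A. \<forall>b\<in>A. r a b \<longrightarrow> r b a \<longrightarrow> a = b"
    using insert.prems(2) by (meson insertCI)
  obtain m where m: "m \<in> A" "\<forall>b\<in>A. r b m \<longrightarrow> b = m" using insert.IH[OF tr' an'] by blast
  show ?case
  proof (cases "r a m \<and> a \<noteq> m")
    case True
    have "\<forall>b\<in>insert a A. r b a \<longrightarrow> b = a"
    proof (intro ballI impI)
      fix b assume b: "b \<in> insert a A" "r b a"
      show "b = a"
      proof (rule ccontr)
        assume "b \<noteq> a"
        then have bA': "b \<in> A" using b by auto
        have bA: "a \<in> insert a A" "m \<in> insert a A" using m by auto
        have "r b m" using insert.prems(1) bA b True by metis
        then have "b = m" using m bA' by auto
        then have "r m a" "r a m" using b True by auto
        then have "a = m" using insert.prems(2) bA by metis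
        then show False using True by simp
      qed
    qed
    then show ?thesis by blast
  next
    case False
    have "\<forall>b\<in>insert a A. r b m \<longrightarrow> b = m" using m False by auto
    then show ?thesis using m by blast
  qed
qed



lemma tri_solve:
  fixes b :: "'a \<Rightarrow> 'k::comm_ring_1"
  assumes "finite E" "E \<subseteq> U"
    and rf: "\<forall>a\<in>U. r a a"
    and tr: "\<forall>a\<in>U. \<forall>b\<in>U. \<forall>c\<in>U. r a b \<longrightarrow> r b c \<longrightarrow> r a c"
    and an: "\<forall>a\<in>U. \<forall>b\<in>U. r a b \<longrightarrow> r b a \<longrightarrow> a = b"
  shows "\<exists>q. \<forall>w\<in>E. (\<Sum>e\<in>{e\<in>E. r e w}. q e) = b w"
  using assms(1,2)
proof (induction E rule: finite_psubset_induct)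
  case (psubset A)
  show ?case
  proof (cases "A = {}")
    case True then show ?thesis by auto
  next
    case False
    have tr': "\<forall>a\<in>A. \<forall>b\<in>A. \<forall>c\<in>A. r b a \<longrightarrow> r c b \<longrightarrow> r c a"
    proof (intro ballI impI)
      fix a b c assume h: "a \<in> A" "b \<in> A" "c \<in> A" "r b a" "r c b"
      then have "a \<in> U" "b \<in> U" "c \<in> U" using psubset.prems by auto
      then show "r c a" using tr[rule_format, of c b a] h(4,5) by blast
    qed
    have an': "\<forall>a\<in>A. \<forall>b\<in>A. r b a \<longrightarrow> r a b \<longrightarrow> a = b"
    proof (intro ballI impI)
      fix a b assume h: "a \<in> A" "b \<in> A" "r b a" "r a b"
      then have "a \<in> U" "b \<in> U" using psubset.prems by auto
      then show "a = b" using an[rule_format, of a b] h(3,4) by blast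
    qed
    have "\<exists>m\<in>A. \<forall>b\<in>A. r m b \<longrightarrow> b = m"
      using fin_min[where r="\<lambda>x y. r y x", OF psubset.hyps(1) False tr' an'] by simp
    then obtain t where t: "t \<in> A" "\<forall>c\<in>A. r t c \<longrightarrow> c = t" by auto
    have "A - {t} \<subset> A" using t by auto
    moreover have "A - {t} \<subseteq> U" using psubset.prems by auto
    ultimately obtain q' where q': "\<forall>w\<in>A - {t}. (\<Sum>e\<in>{e\<in>A - {t}. r e w}. q' e) = b w"
      using psubset.IH[of "A - {t}"] by blast
    define q where "q = q'(t := b t - (\<Sum>e\<in>{e\<in>A - {t}. r e t}. q' e))"
    have fin: "finite A" by fact
    have rt: "r t t" using rf t psubset.prems by auto
    have "\<forall>w\<in>A. (\<Sum>e\<in>{e\<in>A. r e w}. q e) = b w"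
    proof
      fix w assume w: "w \<in> A"
      show "(\<Sum>e\<in>{e\<in>A. r e w}. q e) = b w"
      proof (cases "w = t")
        case True
        have s: "{e\<in>A. r e w} = insert t {e\<in>A - {t}. r e t}" using True t rt by auto
        have "(\<Sum>e\<in>{e\<in>A. r e w}. q e) = q t + (\<Sum>e\<in>{e\<in>A - {t}. r e t}. q e)"
          unfolding s by (rule sum.insert) (use fin in auto)
        also have "(\<Sum>e\<in>{e\<in>A - {t}. r e t}. q e) = (\<Sum>e\<in>{e\<in>A - {t}. r e t}. q' e)"
          by (rule sum.cong) (auto simp: q_def)
        finally show ?thesis using True by (simp add: q_def)
      next
        case False
        have s: "{e\<in>A. r e w} = {e\<in>A - {t}. r e w}" using False t w by auto
        have "(\<Sum>e\<in>{e\<in>A. r e w}. q e) = (\<Sum>e\<in>{e\<in>A - {t}. r e w}. q' e)"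
          unfolding s by (rule sum.cong) (auto simp: q_def)
        then show ?thesis using q' w False by auto
      qed
    qed
    then show ?thesis by blast
  qed
qed

lemma nondeg:
  fixes F :: "'a \<Rightarrow> 'k::comm_ring_1"
  assumes "finite P"
    and rf: "\<forall>a\<in>P. r a a"
    and tr: "\<forall>a\<in>P. \<forall>b\<in>P. \<forall>c\<in>P. r a b \<longrightarrow> r b c \<longrightarrow> r a c"
    and an: "\<forall>a\<in>P. \<forall>b\<in>P. r a b \<longrightarrow> r b a \<longrightarrow> a = b"
    and Z: "\<forall>w\<in>P. (\<Sum>e\<in>{e\<in>P. r e w}. F e) = 0"
  shows "\<forall>e\<in>P. F e = 0"
proof (rule ccontr)
  assume "\<not> (\<forall>e\<in>P. F e = 0)"
  then have ne: "{e\<in>P. F e \<noteq> 0} \<noteq> {}" by auto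
  have tr': "\<forall>a\<in>{e\<in>P. F e \<noteq> 0}. \<forall>b\<in>{e\<in>P. F e \<noteq> 0}. \<forall>c\<in>{e\<in>P. F e \<noteq> 0}. r a b \<longrightarrow> r b c \<longrightarrow> r a c"
    using tr by blast
  have an': "\<forall>a\<in>{e\<in>P. F e \<noteq> 0}. \<forall>b\<in>{e\<in>P. F e \<noteq> 0}. r a b \<longrightarrow> r b a \<longrightarrow> a = b"
    using an by blast
  have "\<exists>m\<in>{e\<in>P. F e \<noteq> 0}. \<forall>b\<in>{e\<in>P. F e \<noteq> 0}. r b m \<longrightarrow> b = m"
    by (rule fin_min[OF _ ne tr' an']) (use assms(1) in auto)
  then obtain m where m: "m \<in> P" "F m \<noteq> 0" "\<forall>b\<in>P. F b \<noteq> 0 \<longrightarrow> r b m \<longrightarrow> b = m" by auto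
  have "(\<Sum>e\<in>{e\<in>P. r e m}. F e) = (\<Sum>e\<in>{m}. F e)"
    by (rule sum.mono_neutral_right) (use assms(1) rf m in auto)
  then show False using Z m by auto
qed




inductive NS :: "('e set \<Rightarrow> 'e set \<Rightarrow> 'h \<Rightarrow> 'h \<times> 'h) \<Rightarrow> ('e set \<Rightarrow> 'e set \<Rightarrow> 'h \<Rightarrow> 'h \<Rightarrow> 'h)
    \<Rightarrow> 'e set \<Rightarrow> 'h \<Rightarrow> 'e set \<Rightarrow> 'h \<Rightarrow> bool"
  for cop mul I x where
  piece: "L \<inter> J = {} \<Longrightarrow> L \<inter> R = {} \<Longrightarrow> J \<inter> R = {} \<Longrightarrow> L \<union> J \<union> R = I \<Longrightarrow>
    NS cop mul I x J (fst (cop J R (snd (cop L (J \<union> R) x))))"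
| prod: "NS cop mul I x A u \<Longrightarrow> NS cop mul I x B v \<Longrightarrow> A \<inter> B = {} \<Longrightarrow> A \<noteq> {} \<Longrightarrow> B \<noteq> {} \<Longrightarrow>
    NS cop mul I x (A \<union> B) (mul A B u v)"

context
  fixes car :: "'e set \<Rightarrow> 'h set" and le rel one mul cop
  assumes H: "poset_hopf_monoid car le rel one mul cop"
begin

lemma species: "poset_species car le rel one"
  using H[unfolded poset_hopf_monoid_def, THEN conjunct1] .

lemma car_empty: "car {} = {one}"
  using species[unfolded poset_species_def, THEN conjunct1] .

lemma lfp: "finite J \<Longrightarrow> locally_finite_poset (car J) (le J)"
proof -
  assume "finite J"
  moreover have "\<forall>I. finite I \<longrightarrow> locally_finite_poset (car I) (le I)"
    using species[unfolded poset_species_def, THEN conjunct2, THEN conjunct1] .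
  ultimately show ?thesis by simp
qed

lemma le_refl: "finite J \<Longrightarrow> a \<in> car J \<Longrightarrow> le J a a"
  using lfp[unfolded locally_finite_poset_def, THEN conjunct1] by simp

lemma le_antisym: "finite J \<Longrightarrow> a \<in> car J \<Longrightarrow> b \<in> car J \<Longrightarrow> le J a b \<Longrightarrow> le J b a \<Longrightarrow> a = b"
  using lfp[unfolded locally_finite_poset_def, THEN conjunct2, THEN conjunct1] by simp

lemma le_trans: "finite J \<Longrightarrow> a \<in> car J \<Longrightarrow> b \<in> car J \<Longrightarrow> c \<in> car J \<Longrightarrow> le J a b \<Longrightarrow> le J b c \<Longrightarrow> le J a c"
  using lfp[unfolded locally_finite_poset_def, THEN conjunct2, THEN conjunct2, THEN conjunct1] by blast

lemma mul_car: "finite S \<Longrightarrow> finite T \<Longrightarrow> S \<inter> T = {} \<Longrightarrow> y \<in> car S \<Longrightarrow> z \<in> car T \<Longrightarrow> mul S T y z \<in> car (S \<union> T)"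
  using H[unfolded poset_hopf_monoid_def, THEN conjunct2, THEN conjunct1] by blast

lemma cop_car: "finite S \<Longrightarrow> finite T \<Longrightarrow> S \<inter> T = {} \<Longrightarrow> x \<in> car (S \<union> T) \<Longrightarrow> cop S T x \<in> car S \<times> car T"
  using H[unfolded poset_hopf_monoid_def, THEN conjunct2, THEN conjunct2, THEN conjunct1] by blast

lemma unit: "finite S \<Longrightarrow> x \<in> car S \<Longrightarrow> mul {} S one x = x \<and> mul S {} x one = x"
  using H[unfolded poset_hopf_monoid_def, THEN conjunct2, THEN conjunct2, THEN conjunct2, THEN conjunct2, THEN conjunct2, THEN conjunct1] by blast

lemma coassoc0: "finite R \<Longrightarrow> finite S \<Longrightarrow> finite T \<Longrightarrow> R \<inter> S = {} \<Longrightarrow> R \<inter> T = {} \<Longrightarrow> S \<inter> T = {} \<Longrightarrow>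
  x \<in> car (R \<union> S \<union> T) \<Longrightarrow>
           (cop R S (fst (cop (R \<union> S) T x)), snd (cop (R \<union> S) T x))
           = ((fst (cop R (S \<union> T) x), fst (cop S T (snd (cop R (S \<union> T) x)))),
              snd (cop S T (snd (cop R (S \<union> T) x))))"
  using H[unfolded poset_hopf_monoid_def, THEN conjunct2, THEN conjunct2, THEN conjunct2, THEN conjunct2, THEN conjunct2, THEN conjunct2, THEN conjunct1] by blast

lemma coassoc:
  assumes "finite R" "finite S" "finite T" "R \<inter> S = {}" "R \<inter> T = {}" "S \<inter> T = {}" "x \<in> car (R \<union> S \<union> T)"
  shows "fst (cop R S (fst (cop (R \<union> S) T x))) = fst (cop R (S \<union> T) x)"
    "snd (cop R S (fst (cop (R \<union> S) T x))) = fst (cop S T (snd (cop R (S \<union> T) x)))"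
    "snd (cop (R \<union> S) T x) = snd (cop S T (snd (cop R (S \<union> T) x)))"
  using coassoc0[OF assms] by (simp_all add: prod_eq_iff)

lemma counit: "finite S \<Longrightarrow> x \<in> car S \<Longrightarrow> cop {} S x = (one, x) \<and> cop S {} x = (x, one)"
  using H[unfolded poset_hopf_monoid_def, THEN conjunct2, THEN conjunct2, THEN conjunct2, THEN conjunct2, THEN conjunct2, THEN conjunct2, THEN conjunct2, THEN conjunct1] by blast

lemma compat: "finite S1 \<Longrightarrow> finite S2 \<Longrightarrow> finite T1 \<Longrightarrow> finite T2 \<Longrightarrow>
        S1 \<inter> S2 = {} \<Longrightarrow> T1 \<inter> T2 = {} \<Longrightarrow> S1 \<union> S2 = T1 \<union> T2 \<Longrightarrow> x \<in> car S1 \<Longrightarrow> y \<in> car S2 \<Longrightarrow>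
           cop T1 T2 (mul S1 S2 x y)
           = (mul (S1 \<inter> T1) (S2 \<inter> T1) (fst (cop (S1 \<inter> T1) (S1 \<inter> T2) x))
                                         (fst (cop (S2 \<inter> T1) (S2 \<inter> T2) y)),
              mul (S1 \<inter> T2) (S2 \<inter> T2) (snd (cop (S1 \<inter> T1) (S1 \<inter> T2) x))
                                         (snd (cop (S2 \<inter> T1) (S2 \<inter> T2) y)))"
  by (rule H[unfolded poset_hopf_monoid_def, THEN conjunct2, THEN conjunct2, THEN conjunct2, THEN conjunct2, THEN conjunct2, THEN conjunct2, THEN conjunct2, THEN conjunct2, rule_format]) auto

end



context
  fixes car :: "'e set \<Rightarrow> 'h set" and le rel one mul cop
  assumes H: "poset_hopf_monoid car le rel one mul cop"
  fixes I :: "'e set" and x :: 'h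
  assumes finI: "finite I" and xI: "x \<in> car I"
begin

lemmas mc = mul_car[OF H] and cc = cop_car[OF H] and un = unit[OF H] and cu = counit[OF H]
  and ca = coassoc[OF H] and cp = compat[OF H] and ce = car_empty[OF H]

lemma NS_car: "NS cop mul I x J u \<Longrightarrow> J \<subseteq> I \<and> u \<in> car J"
proof (induction rule: NS.induct)
  case (piece L J R)
  have f: "finite L" "finite J" "finite R" using piece.hyps(4) finI by (auto intro: finite_subset)
  have "x \<in> car (L \<union> (J \<union> R))" using xI piece.hyps(4) by (simp add: Un_assoc)
  then have "cop L (J \<union> R) x \<in> car L \<times> car (J \<union> R)"
    using cc[of L "J \<union> R" x] f piece.hyps by auto
  then have "snd (cop L (J \<union> R) x) \<in> car (J \<union> R)" by auto
  then have "cop J R (snd (cop L (J \<union> R) x)) \<in> car J \<times> car R"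
    using cc[of J R] f piece.hyps by auto
  then show ?case using piece.hyps(4) by auto
next
  case (prod A u B v)
  have f: "finite A" "finite B" using prod.IH finI by (auto intro: finite_subset)
  show ?case using prod mc[OF f prod.hyps(3)] by auto
qed

lemma NS_mul_gen:
  assumes "NS cop mul I x X y" "NS cop mul I x Y z" "X \<inter> Y = {}"
  shows "NS cop mul I x (X \<union> Y) (mul X Y y z)"
proof -
  have X: "X \<subseteq> I" "y \<in> car X" and Y: "Y \<subseteq> I" "z \<in> car Y" using NS_car assms by auto
  have f: "finite X" "finite Y" using X Y finI by (auto intro: finite_subset)
  show ?thesis
  proof (cases "X = {}")
    case True
    then have "y = one" using X ce by auto
    then show ?thesis using True un[OF f(2) Y(2)] assms(2) by simp
  next
    case XF: False
    show ?thesis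
    proof (cases "Y = {}")
      case True
      then have "z = one" using Y ce by auto
      then show ?thesis using True un[OF f(1) X(2)] assms(1) by simp
    next
      case False
      then show ?thesis using XF assms by (intro NS.prod) auto
    qed
  qed
qed

lemma NS_cop: "NS cop mul I x J u \<Longrightarrow> A \<union> B = J \<Longrightarrow> A \<inter> B = {} \<Longrightarrow>
  NS cop mul I x A (fst (cop A B u)) \<and> NS cop mul I x B (snd (cop A B u))"
proof (induction arbitrary: A B rule: NS.induct)
  case (piece L J R)
  have f: "finite L" "finite A" "finite B" "finite R" using piece.hyps(4) piece.prems finI by (auto intro: finite_subset)
  have eq: "A \<union> (B \<union> R) = J \<union> R" using piece.prems by auto
  define w where "w = snd (cop L (J \<union> R) x)"
  have xx: "x \<in> car (L \<union> A \<union> (B \<union> R))" using xI piece.hyps(4) piece.prems by (metis Un_assoc)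
  have "cop L (A \<union> (B \<union> R)) x \<in> car L \<times> car (A \<union> (B \<union> R))"
    by (rule cc) (use f piece.hyps piece.prems xx in \<open>auto simp: Un_assoc\<close>)
  then have wc: "w \<in> car (A \<union> B \<union> R)" unfolding w_def eq[symmetric] by (auto simp: Un_assoc)
  have J: "J = A \<union> B" using piece.prems by auto
  have a1: "fst (cop A B (fst (cop J R w))) = fst (cop A (B \<union> R) w)"
    unfolding J by (rule ca(1)) (use f piece.hyps piece.prems(2) wc J in auto)
  have a2: "snd (cop A B (fst (cop J R w))) = fst (cop B R (snd (cop A (B \<union> R) w)))"
    unfolding J by (rule ca(2)) (use f piece.hyps piece.prems(2) wc J in auto)
  have a3: "snd (cop (L \<union> A) (B \<union> R) x) = snd (cop A (B \<union> R) (snd (cop L (A \<union> (B \<union> R)) x)))"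
    by (rule ca(3)) (use f piece.hyps piece.prems(2) xx J in auto)
  have n1: "NS cop mul I x A (fst (cop A (B \<union> R) (snd (cop L (A \<union> (B \<union> R)) x))))"
    by (rule NS.piece) (use piece.hyps piece.prems(2) J in auto)
  have n2: "NS cop mul I x B (fst (cop B R (snd (cop (L \<union> A) (B \<union> R) x))))"
    by (rule NS.piece) (use piece.hyps piece.prems(2) J in auto)
  show ?case
    using n1 n2 a1 a2 a3 unfolding eq w_def by simp
next
  case (prod A' u B' v)
  have cA: "A' \<subseteq> I" "u \<in> car A'" and cB: "B' \<subseteq> I" "v \<in> car B'" using NS_car prod.hyps by auto
  have f: "finite A'" "finite B'" "finite A" "finite B" using cA cB prod.prems finI by (auto intro: finite_subset)
  have c: "cop A B (mul A' B' u v)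
           = (mul (A' \<inter> A) (B' \<inter> A) (fst (cop (A' \<inter> A) (A' \<inter> B) u))
                                         (fst (cop (B' \<inter> A) (B' \<inter> B) v)),
              mul (A' \<inter> B) (B' \<inter> B) (snd (cop (A' \<inter> A) (A' \<inter> B) u))
                                         (snd (cop (B' \<inter> A) (B' \<inter> B) v)))"
    by (rule cp) (use f prod.hyps prod.prems cA cB in auto)
  have i1: "NS cop mul I x (A' \<inter> A) (fst (cop (A' \<inter> A) (A' \<inter> B) u)) \<and> NS cop mul I x (A' \<inter> B) (snd (cop (A' \<inter> A) (A' \<inter> B) u))"
    by (rule prod.IH(1)) (use prod.prems in auto)
  have i2: "NS cop mul I x (B' \<inter> A) (fst (cop (B' \<inter> A) (B' \<inter> B) v)) \<and> NS cop mul I x (B' \<inter> B) (snd (cop (B' \<inter> A) (B' \<inter> B) v))"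
    by (rule prod.IH(2)) (use prod.prems in auto)
  have eA: "A' \<inter> A \<union> B' \<inter> A = A" and eB: "A' \<inter> B \<union> B' \<inter> B = B" using prod.prems by auto
  have d: "A' \<inter> A \<inter> (B' \<inter> A) = {}" "A' \<inter> B \<inter> (B' \<inter> B) = {}" using prod.hyps by auto
  show ?case
    using NS_mul_gen[OF conjunct1[OF i1] conjunct1[OF i2] d(1)] NS_mul_gen[OF conjunct2[OF i1] conjunct2[OF i2] d(2)]
    unfolding c eA eB by simp
qed

end



lemma NS_finite:
  assumes finI: "finite I"
  shows "J \<subseteq> I \<Longrightarrow> finite {u. NS cop mul I x J u}"
proof (induction "card J" arbitrary: J rule: less_induct)
  case less
  have fJ: "finite J" using less.prems finI by (auto intro: finite_subset)
  define Pc where "Pc = (\<lambda>(L,R). fst (cop J R (snd (cop L (J \<union> R) x)))) ` (Pow I \<times> Pow I)"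
  define Ix where "Ix = {(A,B). A \<in> Pow J \<and> B \<in> Pow J \<and> A \<noteq> {} \<and> B \<noteq> {} \<and> A \<inter> B = {} \<and> A \<union> B = J}"
  define Mc where "Mc = (\<Union>(A,B)\<in>Ix. (\<lambda>(u,v). mul A B u v) ` ({u. NS cop mul I x A u} \<times> {v. NS cop mul I x B v}))"
  have sub: "{u. NS cop mul I x J u} \<subseteq> Pc \<union> Mc"
  proof
    fix u assume "u \<in> {u. NS cop mul I x J u}"
    then have "NS cop mul I x J u" by simp
    then show "u \<in> Pc \<union> Mc"
    proof (cases rule: NS.cases)
      case (piece L R)
      then have "(L,R) \<in> Pow I \<times> Pow I" by auto
      moreover have "u = (\<lambda>(L,R). fst (cop J R (snd (cop L (J \<union> R) x)))) (L,R)" using piece by simp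
      ultimately have "u \<in> Pc" unfolding Pc_def by (rule rev_image_eqI)
      then show ?thesis by (rule UnI1)
    next
      case (prod A u1 B v1)
      then have m1: "(A,B) \<in> Ix" unfolding Ix_def by auto
      have m2: "u \<in> (\<lambda>(u,v). mul A B u v) ` ({u. NS cop mul I x A u} \<times> {v. NS cop mul I x B v})"
        using prod by (intro rev_image_eqI[of "(u1,v1)"]) auto
      have "u \<in> Mc" unfolding Mc_def UN_iff by (rule bexI[of _ "(A,B)"]) (use m1 m2 in simp_all)
      then show ?thesis by (rule UnI2)
    qed
  qed
  have "finite Pc" unfolding Pc_def using finI by simp
  moreover have "finite Mc"
    unfolding Mc_def
  proof (rule finite_UN_I)
    show "finite Ix"
      by (rule finite_subset[of _ "Pow J \<times> Pow J"]) (use fJ in \<open>auto simp: Ix_def\<close>)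
  next
    fix p assume p: "p \<in> Ix"
    obtain A B where AB: "p = (A,B)" by fastforce
    have h: "A \<subseteq> J" "B \<subseteq> J" "A \<noteq> {}" "B \<noteq> {}" "A \<inter> B = {}" "A \<union> B = J" using p AB by (auto simp: Ix_def)
    have "A \<subset> J" using h by blast
    then have "card A < card J" using fJ by (rule psubset_card_mono[rotated])
    then have fA: "finite {u. NS cop mul I x A u}" using less.hyps[of A] h less.prems by simp
    have "B \<subset> J" using h by blast
    then have "card B < card J" using fJ by (rule psubset_card_mono[rotated])
    then have fB: "finite {u. NS cop mul I x B u}" using less.hyps[of B] h less.prems by simp
    show "finite ((\<lambda>(A, B). (\<lambda>(u, v). mul A B u v) ` ({u. NS cop mul I x A u} \<times> {v. NS cop mul I x B v})) p)"
      using fA fB AB by simp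
  qed
  ultimately have "finite (Pc \<union> Mc)" by simp
  then show ?case using sub by (rule finite_subset[rotated])
qed




context
  fixes car :: "'e set \<Rightarrow> 'h set" and le rel one mul cop
  assumes H: "poset_hopf_monoid car le rel one mul cop"
  assumes G1: "\<forall>S T. finite S \<and> finite T \<and> S \<inter> T = {} \<longrightarrow>
        (\<forall>x\<in>car (S \<union> T). \<forall>y\<in>car S. \<forall>z\<in>car T.
           prod_le le S T (cop S T x) (y, z) \<longleftrightarrow> le (S \<union> T) x (mul S T y z))"
begin

lemma gal: "finite S \<Longrightarrow> finite T \<Longrightarrow> S \<inter> T = {} \<Longrightarrow> x \<in> car (S \<union> T) \<Longrightarrow> y \<in> car S \<Longrightarrow> z \<in> car T \<Longrightarrow>
   prod_le le S T (cop S T x) (y, z) \<longleftrightarrow> le (S \<union> T) x (mul S T y z)"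
  by (rule G1[rule_format]) auto

lemma exist:
  fixes f :: "'h \<Rightarrow> 'k::comm_ring_1"
  assumes finI: "finite I" and fk: "f \<in> kspace car I"
  shows "\<exists>p q. p \<in> prim car cop I \<and> q \<in> decomp car mul I \<and> f = (\<lambda>x. p x + q x)"
proof -
  define supp where "supp = {x. f x \<noteq> 0}"
  have fs: "finite supp" and ss: "supp \<subseteq> car I" using fk by (auto simp: kspace_def supp_def)
  define G where "G = (\<Union>g\<in>supp. {u. NS cop mul I g I u})"
  have fG: "finite G" unfolding G_def
    by (intro finite_UN_I fs) (rule NS_finite[OF finI], simp)
  have GI: "G \<subseteq> car I"
  proof
    fix u assume "u \<in> G"
    then obtain g where g: "g \<in> supp" "NS cop mul I g I u" unfolding G_def by blast
    show "u \<in> car I" using NS_car[OF H finI _ g(2)] g(1) ss by blast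
  qed
  have sG: "supp \<subseteq> G"
  proof
    fix g assume g: "g \<in> supp"
    then have gI: "g \<in> car I" using ss by blast
    have "NS cop mul I g I (fst (cop I {} (snd (cop {} (I \<union> {}) g))))"
      by (rule NS.piece) auto
    moreover have "fst (cop I {} (snd (cop {} (I \<union> {}) g))) = g"
      using counit[OF H finI gI] by simp
    ultimately show "g \<in> G" unfolding G_def using g by auto
  qed
  have clos: "mul S T (fst (cop S T u)) (snd (cop S T u)) \<in> G"
    if u: "u \<in> G" and st: "S \<union> T = I" "S \<inter> T = {}" "S \<noteq> {}" "T \<noteq> {}" for u S T
  proof -
    obtain g where g: "g \<in> supp" "NS cop mul I g I u" using u unfolding G_def by blast
    have gI: "g \<in> car I" using g ss by blast
    have "NS cop mul I g S (fst (cop S T u)) \<and> NS cop mul I g T (snd (cop S T u))"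
      using NS_cop[OF H finI gI g(2) st(1,2)] .
    then have "NS cop mul I g (S \<union> T) (mul S T (fst (cop S T u)) (snd (cop S T u)))"
      using st by (intro NS.prod) auto
    then show ?thesis unfolding G_def using g st(1) by auto
  qed
  define Dset where "Dset = {mul S T y z | S T y z. S \<union> T = I \<and> S \<inter> T = {} \<and> S \<noteq> {} \<and> T \<noteq> {} \<and>
                                  y \<in> car S \<and> z \<in> car T}"
  define E where "E = G \<inter> Dset"
  have fE: "finite E" using fG by (simp add: E_def)
  have EG: "E \<subseteq> G" by (simp add: E_def)
  have cE: "mul S T (fst (cop S T u)) (snd (cop S T u)) \<in> E"
    if u: "u \<in> G" and st: "S \<union> T = I" "S \<inter> T = {}" "S \<noteq> {}" "T \<noteq> {}" for u S T
  proof -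
    have fST: "finite S" "finite T" using st finI by (auto intro: finite_subset)
    have "u \<in> car (S \<union> T)" using u GI st by auto
    then have "cop S T u \<in> car S \<times> car T" using cop_car[OF H fST st(2)] by blast
    then have c: "fst (cop S T u) \<in> car S" "snd (cop S T u) \<in> car T" by auto
    have "mul S T (fst (cop S T u)) (snd (cop S T u)) \<in> Dset" unfolding Dset_def using st c by blast
    then show ?thesis using clos[OF u st] unfolding E_def by blast
  qed
  have EI: "E \<subseteq> car I" using EG GI by blast
  obtain q where q: "\<forall>w\<in>E. (\<Sum>e\<in>{e\<in>E. le I e w}. q e) = (\<Sum>g\<in>{g\<in>G. le I g w}. f g)"
  proof -
    have "\<exists>q. \<forall>w\<in>E. (\<Sum>e\<in>{e\<in>E. le I e w}. q e) = (\<lambda>w. \<Sum>g\<in>{g\<in>G. le I g w}. f g) w"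
    proof (rule tri_solve[OF fE EI])
      show "\<forall>a\<in>car I. le I a a" using le_refl[OF H finI] by blast
      show "\<forall>a\<in>car I. \<forall>b\<in>car I. \<forall>c\<in>car I. le I a b \<longrightarrow> le I b c \<longrightarrow> le I a c"
        using le_trans[OF H finI] by blast
      show "\<forall>a\<in>car I. \<forall>b\<in>car I. le I a b \<longrightarrow> le I b a \<longrightarrow> a = b"
        using le_antisym[OF H finI] by blast
    qed
    then show ?thesis using that by auto
  qed
  define qd where "qd = (\<lambda>w. if w \<in> E then q w else 0)"
  define p where "p = (\<lambda>w. f w - qd w)"
  have fpq: "f = (\<lambda>x. p x + qd x)" by (simp add: p_def)
  have qdd: "qd \<in> decomp car mul I"
  proof -
    have "qd = (\<lambda>w. \<Sum>a\<in>E. q a * bvec a w)"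
    proof
      fix w
      have "(\<Sum>a\<in>E. q a * bvec a w) = (\<Sum>a\<in>E. if w = a then q a else 0)"
        by (rule sum.cong) (auto simp: bvec_def)
      also have "\<dots> = qd w" using fE by (simp add: qd_def)
      finally show "qd w = (\<Sum>a\<in>E. q a * bvec a w)" by simp
    qed
    moreover have "E \<subseteq> Dset" by (simp add: E_def)
    ultimately show ?thesis unfolding decomp_def Dset_def using fE by blast
  qed
  have psupp: "{x. p x \<noteq> 0} \<subseteq> G"
  proof
    fix x assume "x \<in> {x. p x \<noteq> 0}"
    then have "f x \<noteq> 0 \<or> qd x \<noteq> 0" by (auto simp: p_def)
    then show "x \<in> G" using sG EG by (auto simp: supp_def qd_def split: if_splits)
  qed
  have pk: "p \<in> kspace car I"
    unfolding kspace_def using psupp fG GI by (auto intro: finite_subset)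
  have Zp: "(\<Sum>g\<in>{g\<in>G. le I g w}. p g) = 0" if w: "w \<in> E" for w
  proof -
    have fw: "finite {g\<in>G. le I g w}" using fG by simp
    have "(\<Sum>g\<in>{g\<in>G. le I g w}. qd g) = (\<Sum>e\<in>{e\<in>E. le I e w}. q e)"
      by (rule sum.mono_neutral_cong_right[OF fw]) (use EG in \<open>auto simp: qd_def\<close>)
    then have "(\<Sum>g\<in>{g\<in>G. le I g w}. qd g) = (\<Sum>g\<in>{g\<in>G. le I g w}. f g)" using q w by simp
    then show ?thesis by (simp add: p_def sum_subtractf)
  qed
  have pp: "p \<in> prim car cop I"
    unfolding prim_def
  proof (intro CollectI conjI allI impI pk)
    fix S T assume st0: "S \<union> T = I \<and> S \<inter> T = {} \<and> S \<noteq> {} \<and> T \<noteq> {}"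
    then have st: "S \<union> T = I" "S \<inter> T = {}" "S \<noteq> {}" "T \<noteq> {}" by auto
    have fST: "finite S" "finite T" using st finI by (auto intro: finite_subset)
    define F where "F = (\<lambda>\<pi>. \<Sum>x\<in>{x\<in>G. cop S T x = \<pi>}. p x)"
    have cl: "cop_lin cop S T p = F"
    proof
      fix \<pi>
      show "cop_lin cop S T p \<pi> = F \<pi>"
        unfolding cop_lin_def F_def
        by (rule sum.mono_neutral_left) (use fG psupp in auto)
    qed
    define P where "P = cop S T ` G"
    have fP: "finite P" using fG by (simp add: P_def)
    have GST: "G \<subseteq> car (S \<union> T)" using GI st by simp
    have PST: "P \<subseteq> car S \<times> car T" unfolding P_def using GST cop_car[OF H fST st(2)] by blast
    have rf: "\<forall>a\<in>P. prod_le le S T a a"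
      using PST le_refl[OF H fST(1)] le_refl[OF H fST(2)] by (auto simp: prod_le_def)
    have tr: "\<forall>a\<in>P. \<forall>b\<in>P. \<forall>c\<in>P. prod_le le S T a b \<longrightarrow> prod_le le S T b c \<longrightarrow> prod_le le S T a c"
    proof (intro ballI impI)
      fix a b c assume h: "a \<in> P" "b \<in> P" "c \<in> P" "prod_le le S T a b" "prod_le le S T b c"
      then have m: "fst a \<in> car S" "fst b \<in> car S" "fst c \<in> car S" "snd a \<in> car T" "snd b \<in> car T" "snd c \<in> car T" using PST by auto
      have "le S (fst a) (fst c)" using h(4,5) le_trans[OF H fST(1) m(1,2,3)] unfolding prod_le_def by blast
      moreover have "le T (snd a) (snd c)" using h(4,5) le_trans[OF H fST(2) m(4,5,6)] unfolding prod_le_def by blast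
      ultimately show "prod_le le S T a c" unfolding prod_le_def by blast
    qed
    have an: "\<forall>a\<in>P. \<forall>b\<in>P. prod_le le S T a b \<longrightarrow> prod_le le S T b a \<longrightarrow> a = b"
    proof (intro ballI impI)
      fix a b assume h: "a \<in> P" "b \<in> P" "prod_le le S T a b" "prod_le le S T b a"
      then have m: "fst a \<in> car S" "fst b \<in> car S" "snd a \<in> car T" "snd b \<in> car T" using PST by auto
      have "fst a = fst b" using h(3,4) le_antisym[OF H fST(1) m(1,2)] unfolding prod_le_def by blast
      moreover have "snd a = snd b" using h(3,4) le_antisym[OF H fST(2) m(3,4)] unfolding prod_le_def by blast
      ultimately show "a = b" by (simp add: prod_eq_iff)
    qed
    have Z: "\<forall>w\<in>P. (\<Sum>e\<in>{e\<in>P. prod_le le S T e w}. F e) = 0"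
    proof
      fix w assume "w \<in> P"
      then obtain g0 where g0: "g0 \<in> G" "w = cop S T g0" unfolding P_def by blast
      define w0 where "w0 = mul S T (fst w) (snd w)"
      have w0E: "w0 \<in> E" unfolding w0_def g0(2) using cE[OF g0(1) st] .
      have "g0 \<in> car (S \<union> T)" using g0(1) GST by blast
      then have "w \<in> car S \<times> car T" using g0(2) cop_car[OF H fST st(2)] by blast
      then have wc: "fst w \<in> car S" "snd w \<in> car T" by auto
      define S0 where "S0 = {x\<in>G. prod_le le S T (cop S T x) w}"
      have fS0: "finite S0" using fG by (simp add: S0_def)
      have im: "cop S T ` S0 = {e\<in>P. prod_le le S T e w}" unfolding S0_def P_def by blast
      have "(\<Sum>e\<in>{e\<in>P. prod_le le S T e w}. F e) = (\<Sum>e\<in>cop S T ` S0. \<Sum>x\<in>{x\<in>S0. cop S T x = e}. p x)"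
        unfolding im[symmetric] F_def
      proof (rule sum.cong[OF refl])
        fix e assume "e \<in> cop S T ` S0"
        then have "prod_le le S T e w" by (auto simp: S0_def)
        then have "{x\<in>G. cop S T x = e} = {x\<in>S0. cop S T x = e}" by (auto simp: S0_def)
        then show "(\<Sum>x\<in>{x\<in>G. cop S T x = e}. p x) = (\<Sum>x\<in>{x\<in>S0. cop S T x = e}. p x)" by simp
      qed
      also have "\<dots> = (\<Sum>x\<in>S0. p x)" by (rule sum.image_gen[symmetric, OF fS0])
      also have "S0 = {x\<in>G. le I x w0}"
      proof -
        have "prod_le le S T (cop S T x) w \<longleftrightarrow> le I x w0" if "x \<in> G" for x
        proof -
          have "w = (fst w, snd w)" by simp
          then have "prod_le le S T (cop S T x) w \<longleftrightarrow> prod_le le S T (cop S T x) (fst w, snd w)" by simp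
          also have "\<dots> \<longleftrightarrow> le (S \<union> T) x (mul S T (fst w) (snd w))"
            by (rule gal[OF fST st(2)]) (use that GST wc in auto)
          finally show ?thesis unfolding w0_def st(1) .
        qed
        then show ?thesis unfolding S0_def by blast
      qed
      also have "(\<Sum>x\<in>{x\<in>G. le I x w0}. p x) = 0" by (rule Zp[OF w0E])
      finally show "(\<Sum>e\<in>{e\<in>P. prod_le le S T e w}. F e) = 0" .
    qed
    have F0: "\<forall>e\<in>P. F e = 0" by (rule nondeg[OF fP rf tr an Z])
    show "cop_lin cop S T p = (\<lambda>_. 0)"
    proof
      fix \<pi>
      show "cop_lin cop S T p \<pi> = 0"
      proof (cases "\<pi> \<in> P")
        case True then show ?thesis using F0 cl by simp
      next
        case False
        then have e: "{x\<in>G. cop S T x = \<pi>} = {}" unfolding P_def by blast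
        have "cop_lin cop S T p \<pi> = F \<pi>" using cl by simp
        also have "\<dots> = 0" unfolding F_def e by simp
        finally show ?thesis .
      qed
    qed
  qed
  show ?thesis using pp qdd fpq by blast
qed

end



context
  fixes car :: "'e set \<Rightarrow> 'h set" and le rel one mul cop
  assumes H: "poset_hopf_monoid car le rel one mul cop"
  assumes G1: "\<forall>S T. finite S \<and> finite T \<and> S \<inter> T = {} \<longrightarrow>
        (\<forall>x\<in>car (S \<union> T). \<forall>y\<in>car S. \<forall>z\<in>car T.
           prod_le le S T (cop S T x) (y, z) \<longleftrightarrow> le (S \<union> T) x (mul S T y z))"
begin

lemma uniq:
  fixes f :: "'h \<Rightarrow> 'k::comm_ring_1"
  assumes finI: "finite I" and fp: "f \<in> prim car cop I" and fd: "f \<in> decomp car mul I"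
  shows "f = (\<lambda>_. 0)"
proof (rule ccontr)
  assume ne0: "f \<noteq> (\<lambda>_. 0)"
  define supp where "supp = {x. f x \<noteq> 0}"
  have fk: "f \<in> kspace car I" using fp by (simp add: prim_def)
  have fs: "finite supp" and ss: "supp \<subseteq> car I" using fk by (auto simp: kspace_def supp_def)
  have sne: "supp \<noteq> {}" using ne0 by (auto simp: supp_def)
  obtain A c where A: "finite A" "A \<subseteq> {mul S T y z | S T y z. S \<union> T = I \<and> S \<inter> T = {} \<and> S \<noteq> {} \<and> T \<noteq> {} \<and>
                                  y \<in> car S \<and> z \<in> car T}" "f = (\<lambda>w. \<Sum>a\<in>A. c a * bvec a w)"
    using fd unfolding decomp_def by blast
  have sA: "supp \<subseteq> A"
  proof
    fix w assume w: "w \<in> supp"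
    show "w \<in> A"
    proof (rule ccontr)
      assume "w \<notin> A"
      then have "(\<Sum>a\<in>A. c a * bvec a w) = (\<Sum>a\<in>A. (0::'k))"
        by (intro sum.cong) (auto simp: bvec_def)
      then have "f w = 0" using A(3) by simp
      then show False using w by (simp add: supp_def)
    qed
  qed
  have tr: "\<forall>a\<in>supp. \<forall>b\<in>supp. \<forall>c\<in>supp. le I a b \<longrightarrow> le I b c \<longrightarrow> le I a c"
  proof (intro ballI impI)
    fix a b c assume "a \<in> supp" "b \<in> supp" "c \<in> supp" "le I a b" "le I b c"
    then show "le I a c" using le_trans[OF H finI] ss by blast
  qed
  have an: "\<forall>a\<in>supp. \<forall>b\<in>supp. le I a b \<longrightarrow> le I b a \<longrightarrow> a = b"
  proof (intro ballI impI)
    fix a b assume "a \<in> supp" "b \<in> supp" "le I a b" "le I b a"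
    then show "a = b" using le_antisym[OF H finI] ss by blast
  qed
  obtain u where u: "u \<in> supp" "\<forall>b\<in>supp. le I b u \<longrightarrow> b = u"
    using fin_min[OF fs sne tr an] by blast
  have "u \<in> A" using u sA by blast
  then obtain S T y z where st: "u = mul S T y z" "S \<union> T = I" "S \<inter> T = {}" "S \<noteq> {}" "T \<noteq> {}"
    "y \<in> car S" "z \<in> car T" using A(2) by blast
  have fST: "finite S" "finite T" using st finI by (auto intro: finite_subset)
  have uI: "u \<in> car I" using u ss by blast
  have cl0: "cop_lin cop S T f = (\<lambda>_. 0)" using fp st unfolding prim_def by blast
  have uc: "u \<in> car (S \<union> T)" using uI st by simp
  have pu: "prod_le le S T (cop S T u) (y, z)"
    using gal[OF H G1 fST st(3) uc st(6,7)] le_refl[OF H finI uI] st(1,2) by simp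
  have set1: "{x. f x \<noteq> 0 \<and> cop S T x = cop S T u} = {u}"
  proof
    show "{u} \<subseteq> {x. f x \<noteq> 0 \<and> cop S T x = cop S T u}" using u by (simp add: supp_def)
  next
    show "{x. f x \<noteq> 0 \<and> cop S T x = cop S T u} \<subseteq> {u}"
    proof
      fix x assume x: "x \<in> {x. f x \<noteq> 0 \<and> cop S T x = cop S T u}"
      then have xs: "x \<in> supp" by (simp add: supp_def)
      then have xc: "x \<in> car (S \<union> T)" using ss st by auto
      have "prod_le le S T (cop S T x) (y, z)" using pu x by simp
      then have "le (S \<union> T) x (mul S T y z)" using gal[OF H G1 fST st(3) xc st(6,7)] by simp
      then have "le I x u" using st by simp
      then show "x \<in> {u}" using u xs by blast
    qed
  qed
  have "cop_lin cop S T f (cop S T u) = f u" unfolding cop_lin_def set1 by simp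
  then have "f u = 0" using cl0 by simp
  then show False using u by (simp add: supp_def)
qed

lemma core:
  assumes finI: "finite I"
  shows "(\<forall>f \<in> kspace car I. \<exists>p q. p \<in> (prim car cop I :: ('h \<Rightarrow> 'k::comm_ring_1) set)
                                 \<and> q \<in> decomp car mul I \<and> f = (\<lambda>x. p x + q x))
       \<and> prim car cop I \<inter> decomp car mul I = {(\<lambda>_. 0 :: 'k)}"
proof
  show "\<forall>f \<in> kspace car I. \<exists>p q. p \<in> (prim car cop I :: ('h \<Rightarrow> 'k::comm_ring_1) set)
                                 \<and> q \<in> decomp car mul I \<and> f = (\<lambda>x. p x + q x)"
    using exist[OF H G1 finI] by blast
  have z1: "(\<lambda>_. 0 :: 'k) \<in> prim car cop I"
    unfolding prim_def kspace_def cop_lin_def by simp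
  have z2: "(\<lambda>_. 0 :: 'k) \<in> decomp car mul I"
    unfolding decomp_def by (rule CollectI, rule exI[of _ "{}"]) simp
  show "prim car cop I \<inter> decomp car mul I = {(\<lambda>_. 0 :: 'k)}"
    using uniq[OF finI] z1 z2 by blast
qed

end

lemma lfp_dual: "locally_finite_poset A r \<Longrightarrow> locally_finite_poset A (\<lambda>a b. r b a)"
  unfolding locally_finite_poset_def
proof (elim conjE, intro conjI)
  assume h: "\<forall>x\<in>A. \<forall>y\<in>A. finite {w \<in> A. r x w \<and> r w y}"
  show "\<forall>x\<in>A. \<forall>y\<in>A. finite {w \<in> A. r w x \<and> r y w}"
  proof (intro ballI)
    fix x y assume "x \<in> A" "y \<in> A"
    then have "finite {w \<in> A. r y w \<and> r w x}" using h by blast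
    moreover have "{w \<in> A. r w x \<and> r y w} = {w \<in> A. r y w \<and> r w x}" by blast
    ultimately show "finite {w \<in> A. r w x \<and> r y w}" by simp
  qed
qed blast+

lemma hopf_dual:
  fixes car :: "'e set \<Rightarrow> 'h set" and le :: "'e set \<Rightarrow> 'h \<Rightarrow> 'h \<Rightarrow> bool"
    and rel :: "('e \<Rightarrow> 'e) \<Rightarrow> 'e set \<Rightarrow> 'h \<Rightarrow> 'h" and one :: 'h
    and mul :: "'e set \<Rightarrow> 'e set \<Rightarrow> 'h \<Rightarrow> 'h \<Rightarrow> 'h" and cop :: "'e set \<Rightarrow> 'e set \<Rightarrow> 'h \<Rightarrow> 'h \<times> 'h"
  assumes H: "poset_hopf_monoid car le rel one mul cop"
  shows "poset_hopf_monoid car (\<lambda>J a b. le J b a) rel one mul cop"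
proof -
  have sp: "poset_species car le rel one" using H[unfolded poset_hopf_monoid_def, THEN conjunct1] .
  have sp': "poset_species car (\<lambda>J a b. le J b a) rel one"
    using sp unfolding poset_species_def
  proof (elim conjE, intro conjI)
    assume "\<forall>I. finite I \<longrightarrow> locally_finite_poset (car I) (le I)"
    then show "\<forall>I. finite I \<longrightarrow> locally_finite_poset (car I) (\<lambda>a b. le I b a)"
      using lfp_dual by blast
  next
    assume h: "\<forall>I s. finite I \<and> inj_on s I \<longrightarrow>
        bij_betw (rel s I) (car I) (car (s ` I)) \<and>
        (\<forall>x\<in>car I. \<forall>y\<in>car I. le I x y \<longrightarrow> le (s ` I) (rel s I x) (rel s I y))"
    show "\<forall>I s. finite I \<and> inj_on s I \<longrightarrow>
        bij_betw (rel s I) (car I) (car (s ` I)) \<and>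
        (\<forall>x\<in>car I. \<forall>y\<in>car I. le I y x \<longrightarrow> le (s ` I) (rel s I y) (rel s I x))"
    proof (intro allI impI conjI ballI)
      fix I :: "'e set" and s :: "'e \<Rightarrow> 'e" assume a: "finite I \<and> inj_on s I"
      have hh: "bij_betw (rel s I) (car I) (car (s ` I)) \<and>
        (\<forall>x\<in>car I. \<forall>y\<in>car I. le I x y \<longrightarrow> le (s ` I) (rel s I x) (rel s I y))"
        using h[rule_format, OF a] .
      show "bij_betw (rel s I) (car I) (car (s ` I))" using hh by (rule conjunct1)
      fix x y :: 'h assume xy: "x \<in> car I" "y \<in> car I" "le I y x"
      show "le (s ` I) (rel s I y) (rel s I x)" using hh[THEN conjunct2] xy by blast
    qed
  qed assumption+
  have m: "\<forall>S T. finite S \<and> finite T \<and> S \<inter> T = {} \<longrightarrow>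
        (\<forall>y\<in>car S. \<forall>z\<in>car T. mul S T y z \<in> car (S \<union> T)) \<and>
        (\<forall>y\<in>car S. \<forall>z\<in>car T. \<forall>y'\<in>car S. \<forall>z'\<in>car T.
            le S y y' \<and> le T z z' \<longrightarrow> le (S \<union> T) (mul S T y z) (mul S T y' z'))"
    using H[unfolded poset_hopf_monoid_def, THEN conjunct2, THEN conjunct1] .
  have m': "\<forall>S T. finite S \<and> finite T \<and> S \<inter> T = {} \<longrightarrow>
        (\<forall>y\<in>car S. \<forall>z\<in>car T. mul S T y z \<in> car (S \<union> T)) \<and>
        (\<forall>y\<in>car S. \<forall>z\<in>car T. \<forall>y'\<in>car S. \<forall>z'\<in>car T.
            le S y' y \<and> le T z' z \<longrightarrow> le (S \<union> T) (mul S T y' z') (mul S T y z))"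
  proof (intro allI impI conjI ballI)
    fix S T :: "'e set" assume a: "finite S \<and> finite T \<and> S \<inter> T = {}"
    fix y z :: 'h assume "y \<in> car S" "z \<in> car T"
    then show "mul S T y z \<in> car (S \<union> T)" using m[rule_format, OF a, THEN conjunct1] by blast
  next
    fix S T :: "'e set" assume a: "finite S \<and> finite T \<and> S \<inter> T = {}"
    fix y z y' z' :: 'h assume b: "y \<in> car S" "z \<in> car T" "y' \<in> car S" "z' \<in> car T"
    assume "le S y' y \<and> le T z' z"
    then show "le (S \<union> T) (mul S T y' z') (mul S T y z)" using m[rule_format, OF a, THEN conjunct2] b by blast
  qed
  have c: "\<forall>S T. finite S \<and> finite T \<and> S \<inter> T = {} \<longrightarrow>
        (\<forall>x\<in>car (S \<union> T). cop S T x \<in> car S \<times> car T) \<and>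
        (\<forall>x\<in>car (S \<union> T). \<forall>x'\<in>car (S \<union> T).
            le (S \<union> T) x x' \<longrightarrow> prod_le le S T (cop S T x) (cop S T x'))"
    using H[unfolded poset_hopf_monoid_def, THEN conjunct2, THEN conjunct2, THEN conjunct1] .
  have c': "\<forall>S T. finite S \<and> finite T \<and> S \<inter> T = {} \<longrightarrow>
        (\<forall>x\<in>car (S \<union> T). cop S T x \<in> car S \<times> car T) \<and>
        (\<forall>x\<in>car (S \<union> T). \<forall>x'\<in>car (S \<union> T).
            le (S \<union> T) x' x \<longrightarrow> prod_le (\<lambda>J a b. le J b a) S T (cop S T x) (cop S T x'))"
  proof (intro allI impI conjI ballI)
    fix S T :: "'e set" assume a: "finite S \<and> finite T \<and> S \<inter> T = {}"
    fix x :: 'h assume "x \<in> car (S \<union> T)"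
    then show "cop S T x \<in> car S \<times> car T" using c[rule_format, OF a, THEN conjunct1] by blast
  next
    fix S T :: "'e set" assume a: "finite S \<and> finite T \<and> S \<inter> T = {}"
    fix x x' :: 'h assume b: "x \<in> car (S \<union> T)" "x' \<in> car (S \<union> T)" "le (S \<union> T) x' x"
    then have "prod_le le S T (cop S T x') (cop S T x)" using c[rule_format, OF a, THEN conjunct2] by blast
    then show "prod_le (\<lambda>J a b. le J b a) S T (cop S T x) (cop S T x')" by (simp add: prod_le_def)
  qed
  have rest: "(\<forall>S T s. finite S \<and> finite T \<and> S \<inter> T = {} \<and> inj_on s (S \<union> T) \<longrightarrow>
        (\<forall>y\<in>car S. \<forall>z\<in>car T.
           rel s (S \<union> T) (mul S T y z) = mul (s ` S) (s ` T) (rel s S y) (rel s T z)) \<and>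
        (\<forall>x\<in>car (S \<union> T).
           cop (s ` S) (s ` T) (rel s (S \<union> T) x)
             = (rel s S (fst (cop S T x)), rel s T (snd (cop S T x))))) \<and>
     (\<forall>R S T. finite R \<and> finite S \<and> finite T \<and> R \<inter> S = {} \<and> R \<inter> T = {} \<and> S \<inter> T = {} \<longrightarrow>
        (\<forall>x\<in>car R. \<forall>y\<in>car S. \<forall>z\<in>car T.
           mul (R \<union> S) T (mul R S x y) z = mul R (S \<union> T) x (mul S T y z))) \<and>
     (\<forall>S. finite S \<longrightarrow> (\<forall>x\<in>car S. mul {} S one x = x \<and> mul S {} x one = x)) \<and>
     (\<forall>R S T. finite R \<and> finite S \<and> finite T \<and> R \<inter> S = {} \<and> R \<inter> T = {} \<and> S \<inter> T = {} \<longrightarrow>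
        (\<forall>x\<in>car (R \<union> S \<union> T).
           (cop R S (fst (cop (R \<union> S) T x)), snd (cop (R \<union> S) T x))
           = ((fst (cop R (S \<union> T) x), fst (cop S T (snd (cop R (S \<union> T) x)))),
              snd (cop S T (snd (cop R (S \<union> T) x)))))) \<and>
     (\<forall>S. finite S \<longrightarrow> (\<forall>x\<in>car S. cop {} S x = (one, x) \<and> cop S {} x = (x, one))) \<and>
     (\<forall>S1 S2 T1 T2. finite S1 \<and> finite S2 \<and> finite T1 \<and> finite T2 \<and>
        S1 \<inter> S2 = {} \<and> T1 \<inter> T2 = {} \<and> S1 \<union> S2 = T1 \<union> T2 \<longrightarrow>
        (\<forall>x\<in>car S1. \<forall>y\<in>car S2.
           cop T1 T2 (mul S1 S2 x y)
           = (mul (S1 \<inter> T1) (S2 \<inter> T1) (fst (cop (S1 \<inter> T1) (S1 \<inter> T2) x))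
                                         (fst (cop (S2 \<inter> T1) (S2 \<inter> T2) y)),
              mul (S1 \<inter> T2) (S2 \<inter> T2) (snd (cop (S1 \<inter> T1) (S1 \<inter> T2) x))
                                         (snd (cop (S2 \<inter> T1) (S2 \<inter> T2) y)))))"
    using H[unfolded poset_hopf_monoid_def, THEN conjunct2, THEN conjunct2, THEN conjunct2] .
  show ?thesis unfolding poset_hopf_monoid_def
    by (rule conjI[OF sp' conjI[OF m' conjI[OF c' rest]]])
qed


theorem mainTheorem9:
  fixes car :: "'e set \<Rightarrow> 'h set"
    and le :: "'e set \<Rightarrow> 'h \<Rightarrow> 'h \<Rightarrow> bool"
    and rel :: "('e \<Rightarrow> 'e) \<Rightarrow> 'e set \<Rightarrow> 'h \<Rightarrow> 'h"
    and one :: 'h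
    and mul :: "'e set \<Rightarrow> 'e set \<Rightarrow> 'h \<Rightarrow> 'h \<Rightarrow> 'h"
    and cop :: "'e set \<Rightarrow> 'e set \<Rightarrow> 'h \<Rightarrow> 'h \<times> 'h"
    and I :: "'e set"
  assumes "poset_hopf_monoid car le rel one mul cop"
    and "self_adjoint car le mul cop"
    and "finite I"
  shows "(\<forall>f \<in> kspace car I. \<exists>p q. p \<in> (prim car cop I :: ('h \<Rightarrow> 'k::field_char_0) set)
                                 \<and> q \<in> decomp car mul I \<and> f = (\<lambda>x. p x + q x))
       \<and> prim car cop I \<inter> decomp car mul I = {(\<lambda>_. 0 :: 'k)}"
proof -
  have sa: "(\<forall>S T. finite S \<and> finite T \<and> S \<inter> T = {} \<longrightarrow>
        (\<forall>x\<in>car (S \<union> T). \<forall>y\<in>car S. \<forall>z\<in>car T.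
           prod_le le S T (cop S T x) (y, z) \<longleftrightarrow> le (S \<union> T) x (mul S T y z))) \<or>
     (\<forall>S T. finite S \<and> finite T \<and> S \<inter> T = {} \<longrightarrow>
        (\<forall>x\<in>car (S \<union> T). \<forall>y\<in>car S. \<forall>z\<in>car T.
           le (S \<union> T) (mul S T y z) x \<longleftrightarrow> prod_le le S T (y, z) (cop S T x)))"
    using assms(2) unfolding self_adjoint_def .
  then show ?thesis
  proof
    assume g: "\<forall>S T. finite S \<and> finite T \<and> S \<inter> T = {} \<longrightarrow>
        (\<forall>x\<in>car (S \<union> T). \<forall>y\<in>car S. \<forall>z\<in>car T.
           prod_le le S T (cop S T x) (y, z) \<longleftrightarrow> le (S \<union> T) x (mul S T y z))"
    show ?thesis by (rule core[OF assms(1) g assms(3)])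
  next
    assume g: "\<forall>S T. finite S \<and> finite T \<and> S \<inter> T = {} \<longrightarrow>
        (\<forall>x\<in>car (S \<union> T). \<forall>y\<in>car S. \<forall>z\<in>car T.
           le (S \<union> T) (mul S T y z) x \<longleftrightarrow> prod_le le S T (y, z) (cop S T x))"
    have g': "\<forall>S T. finite S \<and> finite T \<and> S \<inter> T = {} \<longrightarrow>
        (\<forall>x\<in>car (S \<union> T). \<forall>y\<in>car S. \<forall>z\<in>car T.
           prod_le (\<lambda>J a b. le J b a) S T (cop S T x) (y, z) \<longleftrightarrow> (\<lambda>J a b. le J b a) (S \<union> T) x (mul S T y z))"
    proof (intro allI impI ballI)
      fix S T :: "'e set" and x y z :: 'h
      assume a: "finite S \<and> finite T \<and> S \<inter> T = {}" and b: "x \<in> car (S \<union> T)" "y \<in> car S" "z \<in> car T"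
      have "le (S \<union> T) (mul S T y z) x \<longleftrightarrow> prod_le le S T (y, z) (cop S T x)"
        using g[rule_format, OF a b] .
      then show "prod_le (\<lambda>J a b. le J b a) S T (cop S T x) (y, z) \<longleftrightarrow> (\<lambda>J a b. le J b a) (S \<union> T) x (mul S T y z)"
        by (simp add: prod_le_def)
    qed
    show ?thesis by (rule core[OF hopf_dual[OF assms(1)] g' assms(3)])
  qed
qed

end
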